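(* Let $d\ge 2$, $p\in[0,1]$, and let $I$ be the infinite open dual cluster ($I=\emptyset$ if there is none). Then $P_p$-almost surely there is a bijection between the connected components of the hole graph $G(\omega)$ and the connected components of the graph $(\mathbb{L}^d)^*-I$, in which a hole cluster corresponds to the component of $(\mathbb{L}^d)^*-I$ containing the dual vertices lying in its holes; moreover a hole cluster is infinite if and only if the corresponding connected component of $(\mathbb{L}^d)^*-I$ is infinite.
   Context: A face is a $(d-1)$-dimensional elementary cube in $\mathbb{R}^d$ (a product of intervals $[l,l]$ or $[l,l+1]$, $l\in\mathbb{Z}$, with exactly one degenerate factor). Face percolation with parameter $p$: each face open independently with probability $p$ (measure $P_p$); $K(\omega)$ is the union of open faces. Holes are the bounded connected components of $\mathbb{R}^d\setminus K(\omega)$; the hole graph $G(\omega)$ has the holes as vertices (it is the limit $\bigcup_n G^n$ of the corresponding graphs for $K(\omega)\cap[-n,n]^d$), two holes adjacent iff some face lies in both boundaries. Dual lattice $(\mathbb{L}^d)^*$: vertices $(\mathbb{Z}^d)^*=\mathbb{Z}^d+(1/2,\dots,1/2)$, bonds between dual vertices at $\ell^1$-distance $1$. Each dual bond $e^*$ crosses a unique face $Q_{e^*}$, and $e^*$ is open iff $Q_{e^*}$ is closed (this is bond percolation with parameter $1-p$, in which almost surely there is at most one infinite open cluster). $(\mathbb{L}^d)^*-I$ is the subgraph of the full dual lattice (regardless of whether bonds are open) with vertex set $(\mathbb{Z}^d)^*\setminus I$ and all dual bonds having both endpoints outside $I$. A hole cluster is infinite if it has infinitely many holes. *)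

theory Defs
  imports "HOL-Analysis.Analysis" "HOL-Probability.Probability"
begin

text \<open>Lattice Z^d is int^'n (d = CARD('n)). A face is encoded by a pair (a, j):
  the elementary cube with degenerate factor [a_j, a_j] in coordinate j and
  factors [a_i, a_i + 1] in all other coordinates i.\<close>

type_synonym 'n face = "(int ^ 'n) \<times> 'n"

definition face_set :: "'n::finite face \<Rightarrow> (real ^ 'n) set" where
  "face_set f = {x. x $ snd f = of_int (fst f $ snd f) \<and>
      (\<forall>i. i \<noteq> snd f \<longrightarrow> of_int (fst f $ i) \<le> x $ i \<and> x $ i \<le> of_int (fst f $ i) + 1)}"

text \<open>Configuration: omega f = True iff face f is open.\<close>
definition Kset :: "('n::finite face \<Rightarrow> bool) \<Rightarrow> (real ^ 'n) set" where
  "Kset \<omega> = \<Union>{face_set f | f. \<omega> f}"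

definition holes :: "('n::finite face \<Rightarrow> bool) \<Rightarrow> (real ^ 'n) set set" where
  "holes \<omega> = {C \<in> components (- Kset \<omega>). bounded C}"

definition hole_adj :: "('n::finite face \<Rightarrow> bool) \<Rightarrow> (real ^ 'n) set \<Rightarrow> (real ^ 'n) set \<Rightarrow> bool" where
  "hole_adj \<omega> H1 H2 \<longleftrightarrow> H1 \<in> holes \<omega> \<and> H2 \<in> holes \<omega> \<and> H1 \<noteq> H2 \<and>
     (\<exists>f. face_set f \<subseteq> frontier H1 \<and> face_set f \<subseteq> frontier H2)"

definition hole_edges :: "('n::finite face \<Rightarrow> bool) \<Rightarrow> ((real ^ 'n) set \<times> (real ^ 'n) set) set" where
  "hole_edges \<omega> = {(H1, H2). hole_adj \<omega> H1 H2}"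

definition hole_clusters :: "('n::finite face \<Rightarrow> bool) \<Rightarrow> (real ^ 'n) set set set" where
  "hole_clusters \<omega> = {{H'. (H, H') \<in> (hole_edges \<omega>)\<^sup>*} | H. H \<in> holes \<omega>}"

text \<open>Dual lattice: the dual vertex encoded by v :: int^'n is the point v + (1/2,...,1/2).\<close>
definition dual_pt :: "int ^ 'n::finite \<Rightarrow> real ^ 'n" where
  "dual_pt v = (\<chi> i. of_int (v $ i) + 1/2)"

definition dual_adj :: "int ^ 'n::finite \<Rightarrow> int ^ 'n \<Rightarrow> bool" where
  "dual_adj v w \<longleftrightarrow> (\<Sum>i\<in>UNIV. \<bar>v $ i - w $ i\<bar>) = 1"

definition crossed_face :: "int ^ 'n::finite \<Rightarrow> int ^ 'n \<Rightarrow> 'n face" where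
  "crossed_face v w = ((\<chi> i. max (v $ i) (w $ i)), (SOME k. v $ k \<noteq> w $ k))"

definition open_dual_edges :: "('n::finite face \<Rightarrow> bool) \<Rightarrow> ((int ^ 'n) \<times> (int ^ 'n)) set" where
  "open_dual_edges \<omega> = {(v, w). dual_adj v w \<and> \<not> \<omega> (crossed_face v w)}"

text \<open>Union of infinite open dual clusters (a.s. at most one; empty if none).\<close>
definition inf_dual_cluster :: "('n::finite face \<Rightarrow> bool) \<Rightarrow> (int ^ 'n) set" where
  "inf_dual_cluster \<omega> = {v. infinite {w. (v, w) \<in> (open_dual_edges \<omega>)\<^sup>*}}"

definition dual_minus_edges :: "(int ^ 'n::finite) set \<Rightarrow> ((int ^ 'n) \<times> (int ^ 'n)) set" where
  "dual_minus_edges I = {(v, w). v \<notin> I \<and> w \<notin> I \<and> dual_adj v w}"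

definition dual_minus_components :: "(int ^ 'n::finite) set \<Rightarrow> (int ^ 'n) set set" where
  "dual_minus_components I = {{w. (v, w) \<in> (dual_minus_edges I)\<^sup>*} | v. v \<notin> I}"

definition face_perc :: "real \<Rightarrow> ('n::finite face \<Rightarrow> bool) measure" where
  "face_perc p = PiM UNIV (\<lambda>_. measure_pmf (bernoulli_pmf p))"

end

theory Submission
  imports Defs
begin

definition cubes :: "real ^ 'n::finite \<Rightarrow> (int ^ 'n) set" where
  "cubes x = {u. \<forall>i. of_int (u $ i) \<le> x $ i \<and> x $ i \<le> of_int (u $ i) + 1}"

definition ocube :: "int ^ 'n::finite \<Rightarrow> (real ^ 'n) set" where
  "ocube u = {x. \<forall>i. of_int (u $ i) < x $ i \<and> x $ i < of_int (u $ i) + 1}"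

definition flv :: "real ^ 'n::finite \<Rightarrow> int ^ 'n" where
  "flv x = (\<chi> i. floor (x $ i))"

lemma flv_cubes: "flv x \<in> cubes x"
  unfolding flv_def cubes_def by (simp add: of_int_floor_le real_of_int_floor_add_one_ge)

lemma dual_pt_ocube: "dual_pt u \<in> ocube u"
  unfolding dual_pt_def ocube_def by auto

lemma ocube_notK: "x \<in> ocube u \<Longrightarrow> x \<notin> Kset \<omega>"
proof
  assume x: "x \<in> ocube u" and "x \<in> Kset \<omega>"
  then obtain f where "x \<in> face_set f" unfolding Kset_def by auto
  then have e: "x $ snd f = of_int (fst f $ snd f)" unfolding face_set_def by auto
  from x have "of_int (u $ snd f) < x $ snd f" "x $ snd f < of_int (u $ snd f) + 1"
    unfolding ocube_def by auto
  with e have "u $ snd f < fst f $ snd f" "fst f $ snd f < u $ snd f + 1" by linarith+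
  then show False by linarith
qed

lemma ocube_box: "ocube u = box (\<chi> i. of_int (u $ i)) (\<chi> i. of_int (u $ i) + 1)"
  unfolding ocube_def interval_cart by auto

lemma closure_ocube: "closure (ocube u) = {x. \<forall>i. of_int (u $ i) \<le> x $ i \<and> x $ i \<le> of_int (u $ i) + 1}"
proof -
  have "box (\<chi> i. of_int (u $ i)) (\<chi> i. of_int (u $ i) + (1::real)) \<noteq> {}"
    using dual_pt_ocube[of u] ocube_box[of u] by auto
  then have "closure (ocube u) = cbox (\<chi> i. of_int (u $ i)) (\<chi> i. of_int (u $ i) + (1::real))"
    unfolding ocube_box by (rule closure_box)
  then show ?thesis unfolding interval_cart by simp
qed

lemma connected_ocube: "connected (ocube u)"
  unfolding ocube_box by (simp add: convex_connected)

lemma sum_one_int: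
  fixes f :: "'a \<Rightarrow> int"
  assumes "finite A" "\<And>i. i \<in> A \<Longrightarrow> f i \<ge> 0" "sum f A = 1"
  shows "\<exists>k\<in>A. f k = 1 \<and> (\<forall>i\<in>A. i \<noteq> k \<longrightarrow> f i = 0)"
proof -
  have "\<exists>k\<in>A. f k \<noteq> 0"
  proof (rule ccontr)
    assume "\<not> ?thesis"
    then have "sum f A = 0" by simp
    with assms(3) show False by simp
  qed
  then obtain k where k: "k \<in> A" "f k \<noteq> 0" by blast
  have s: "sum f A = f k + sum f (A - {k})" by (rule sum.remove[OF assms(1) k(1)])
  have r: "sum f (A - {k}) \<ge> 0" by (rule sum_nonneg) (simp add: assms(2))
  have fk0: "f k \<ge> 0" by (rule assms(2)[OF k(1)])
  have fk: "f k = 1" using s r k(2) fk0 assms(3) by linarith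
  then have s0: "sum f (A - {k}) = 0" using s assms(3) by linarith
  have "\<forall>i\<in>A - {k}. f i = 0"
  proof
    fix i assume i: "i \<in> A - {k}"
    have "finite (A - {k})" using assms(1) by simp
    moreover have "\<forall>j\<in>A - {k}. 0 \<le> f j" using assms(2) by simp
    ultimately show "f i = 0" using sum_nonneg_eq_0_iff[of "A - {k}" f] s0 i by blast
  qed
  then show ?thesis using k fk by blast
qed

lemma dual_adjD:
  assumes "dual_adj v w"
  obtains k where "\<bar>v $ k - w $ k\<bar> = 1" "\<And>i. i \<noteq> k \<Longrightarrow> v $ i = w $ i"
    "(SOME k. v $ k \<noteq> w $ k) = k"
proof -
  have "\<exists>k\<in>UNIV. \<bar>v $ k - w $ k\<bar> = 1 \<and> (\<forall>i\<in>UNIV. i \<noteq> k \<longrightarrow> \<bar>v $ i - w $ i\<bar> = 0)"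
    by (rule sum_one_int) (use assms in \<open>auto simp: dual_adj_def\<close>)
  then obtain k where k: "\<bar>v $ k - w $ k\<bar> = 1" "\<And>i. i \<noteq> k \<Longrightarrow> \<bar>v $ i - w $ i\<bar> = 0"
    by blast
  then have o: "\<And>i. i \<noteq> k \<Longrightarrow> v $ i = w $ i" by auto
  have "(SOME k. v $ k \<noteq> w $ k) = k"
  proof (rule some_equality)
    show "v $ k \<noteq> w $ k" using k by auto
    show "\<And>j. v $ j \<noteq> w $ j \<Longrightarrow> j = k" using o by blast
  qed
  then show ?thesis using that k o by blast
qed

lemma dual_adjI:
  assumes "\<bar>v $ k - w $ k\<bar> = 1" "\<And>i. i \<noteq> k \<Longrightarrow> v $ i = w $ i"
  shows "dual_adj v w"
proof -
  have "(\<Sum>i\<in>UNIV. \<bar>v $ i - w $ i\<bar>) = (\<Sum>i\<in>UNIV. if i = k then 1 else 0)"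
    using assms by (intro sum.cong) auto
  then show ?thesis unfolding dual_adj_def by simp
qed

lemma dual_adj_sym: "dual_adj v w \<Longrightarrow> dual_adj w v"
  unfolding dual_adj_def by (simp add: abs_minus_commute)

lemma crossed_face_sym: "crossed_face v w = crossed_face w v"
proof -
  have "(\<lambda>k. v $ k \<noteq> w $ k) = (\<lambda>k. w $ k \<noteq> v $ k)" by auto
  moreover have "(\<chi> i. max (v $ i) (w $ i)) = (\<chi> i. max (w $ i) (v $ i))"
    by (simp add: max.commute)
  ultimately show ?thesis unfolding crossed_face_def by simp
qed

lemma sym_E: "sym (open_dual_edges \<omega>)"
proof (rule symI)
  fix a b assume "(a, b) \<in> open_dual_edges \<omega>"
  then show "(b, a) \<in> open_dual_edges \<omega>"
    unfolding open_dual_edges_def using dual_adj_sym[of a b] crossed_face_sym[of a b] by auto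
qed

lemma E_sym: "(v, w) \<in> (open_dual_edges \<omega>)\<^sup>* \<Longrightarrow> (w, v) \<in> (open_dual_edges \<omega>)\<^sup>*"
  by (meson sym_E sym_rtrancl symD)


abbreviation EE :: "('n::finite face \<Rightarrow> bool) \<Rightarrow> ((int ^ 'n) \<times> (int ^ 'n)) set" where
  "EE \<omega> \<equiv> open_dual_edges \<omega>"

lemma face_K: "\<omega> g \<Longrightarrow> x \<in> face_set g \<Longrightarrow> x \<in> Kset \<omega>"
  unfolding Kset_def by blast

lemma cubes_diff:
  assumes "u \<in> cubes x" "u' \<in> cubes x" "u $ i \<noteq> u' $ i"
  shows "\<bar>u $ i - u' $ i\<bar> = 1 \<and> x $ i = of_int (max (u $ i) (u' $ i))"
proof -
  have a: "of_int (u $ i) \<le> x $ i" "x $ i \<le> of_int (u $ i) + 1"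
    "of_int (u' $ i) \<le> x $ i" "x $ i \<le> of_int (u' $ i) + 1"
    using assms(1,2) unfolding cubes_def by auto
  then have "of_int (u $ i) \<le> (of_int (u' $ i + 1) :: real)" "of_int (u' $ i) \<le> (of_int (u $ i + 1) :: real)"
    by auto
  then have b: "u $ i \<le> u' $ i + 1" "u' $ i \<le> u $ i + 1" by linarith+
  show ?thesis
  proof (cases "u $ i < u' $ i")
    case True
    then have "u' $ i = u $ i + 1" using b by linarith
    then show ?thesis using a True by auto
  next
    case False
    then have "u $ i = u' $ i + 1" using b assms(3) by linarith
    then show ?thesis using a False by auto
  qed
qed

lemma cubes_same_cluster:
  assumes "x \<notin> Kset \<omega>" "u \<in> cubes x" "u' \<in> cubes x"
  shows "(u, u') \<in> (EE \<omega>)\<^sup>*"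
  using assms(2)
proof (induction "card {i. u $ i \<noteq> u' $ i}" arbitrary: u rule: less_induct)
  case less
  show ?case
  proof (cases "u = u'")
    case True then show ?thesis by simp
  next
    case False
    then obtain k where k: "u $ k \<noteq> u' $ k" by (metis vec_eq_iff)
    define u'' where "u'' = (\<chi> i. if i = k then u' $ k else u $ i)"
    have c: "u'' \<in> cubes x" using less.prems assms(3) unfolding cubes_def u''_def by auto
    have d: "\<bar>u $ k - u' $ k\<bar> = 1" and xk: "x $ k = of_int (max (u $ k) (u' $ k))"
      using cubes_diff[OF less.prems assms(3) k] by auto
    have adj: "dual_adj u u''"
      by (rule dual_adjI[of u k]) (use d in \<open>auto simp: u''_def\<close>)
    have sm: "(SOME k. u $ k \<noteq> u'' $ k) = k"
      using k by (intro some_equality) (auto simp: u''_def split: if_splits)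
    have "x \<in> face_set (crossed_face u u'')"
      unfolding face_set_def crossed_face_def sm using xk less.prems
      by (auto simp: u''_def cubes_def)
    then have "\<not> \<omega> (crossed_face u u'')" using assms(1) face_K by blast
    then have e1: "(u, u'') \<in> EE \<omega>" using adj unfolding open_dual_edges_def by auto
    have eqs: "{i. u'' $ i \<noteq> u' $ i} = {i. u $ i \<noteq> u' $ i} - {k}" by (auto simp: u''_def)
    have "card ({i. u $ i \<noteq> u' $ i} - {k}) < card {i. u $ i \<noteq> u' $ i}"
      by (rule card_Diff1_less) (use k in auto)
    then have "card {i. u'' $ i \<noteq> u' $ i} < card {i. u $ i \<noteq> u' $ i}"
      unfolding eqs .
    then have "(u'', u') \<in> (EE \<omega>)\<^sup>*" using less.hyps c by blast
    then show ?thesis using e1 by (meson converse_rtrancl_into_rtrancl)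
  qed
qed

lemma seg_cc:
  assumes "x \<notin> Kset \<omega>" "u \<in> cubes x"
  shows "connected_component (- Kset \<omega>) x (dual_pt u)"
proof -
  have "closed_segment x (dual_pt u) \<subseteq> - Kset \<omega>"
  proof
    fix y assume "y \<in> closed_segment x (dual_pt u)"
    then obtain t where t: "0 \<le> t" "t \<le> 1" "y = (1 - t) *\<^sub>R x + t *\<^sub>R dual_pt u"
      unfolding closed_segment_def by auto
    show "y \<in> - Kset \<omega>"
    proof (cases "t = 0")
      case True then show ?thesis using t assms(1) by simp
    next
      case False
      then have tp: "t > 0" using t by simp
      have "\<forall>i. of_int (u $ i) < y $ i \<and> y $ i < of_int (u $ i) + 1"
      proof
        fix i
        have yi: "y $ i = (1 - t) * x $ i + t * (of_int (u $ i) + 1/2)"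
          using t(3) by (simp add: dual_pt_def)
        have xi: "of_int (u $ i) \<le> x $ i" "x $ i \<le> of_int (u $ i) + 1"
          using assms(2) unfolding cubes_def by auto
        define A where "A = (1 - t) * (x $ i - of_int (u $ i))"
        have p1: "A \<ge> 0" using xi t unfolding A_def by simp
        have p2': "A \<le> (1 - t) * 1"
          using xi t unfolding A_def by (intro mult_left_mono) auto
        then have p2: "A \<le> 1 - t" by simp
        have "y $ i - of_int (u $ i) = A + t / 2"
          unfolding yi A_def by (simp add: algebra_simps)
        then show "of_int (u $ i) < y $ i \<and> y $ i < of_int (u $ i) + 1"
          using p1 p2 tp by (intro conjI) linarith+
      qed
      then have "y \<in> ocube u" unfolding ocube_def by simp
      then show ?thesis using ocube_notK by blast
    qed
  qed
  then show ?thesis unfolding connected_component_def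
    by (intro exI[of _ "closed_segment x (dual_pt u)"]) auto
qed

lemma edge_cc:
  assumes "(v, w) \<in> EE \<omega>"
  shows "connected_component (- Kset \<omega>) (dual_pt v) (dual_pt w)"
proof -
  have adj: "dual_adj v w" and cl: "\<not> \<omega> (crossed_face v w)"
    using assms unfolding open_dual_edges_def by auto
  obtain k where k: "\<bar>v $ k - w $ k\<bar> = 1" "\<And>i. i \<noteq> k \<Longrightarrow> v $ i = w $ i"
    "(SOME k. v $ k \<noteq> w $ k) = k"
    using dual_adjD[OF adj] by blast
  define y :: "real ^ 'a" where
    "y = (\<chi> i. if i = k then of_int (max (v $ k) (w $ k)) else of_int (v $ i) + 1/2)"
  have yK: "y \<notin> Kset \<omega>"
  proof
    assume "y \<in> Kset \<omega>"
    then obtain g where g: "\<omega> g" "y \<in> face_set g" unfolding Kset_def by auto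
    obtain a j where gaj: "g = (a, j)" by fastforce
    have yj: "y $ j = of_int (a $ j)"
      and yo: "\<And>i. i \<noteq> j \<Longrightarrow> of_int (a $ i) \<le> y $ i \<and> y $ i \<le> of_int (a $ i) + 1"
      using g(2) unfolding face_set_def gaj by auto
    have jk: "j = k"
    proof (rule ccontr)
      assume "j \<noteq> k"
      then have "of_int (v $ j) + 1/2 = (of_int (a $ j) :: real)" using yj by (simp add: y_def)
      then have "(of_int (2 * (v $ j) + 1) :: real) = of_int (2 * a $ j)" by simp
      then have "2 * (v $ j) + 1 = 2 * a $ j" by (simp only: of_int_eq_iff)
      then show False by presburger
    qed
    have "a = (\<chi> i. max (v $ i) (w $ i))"
      unfolding vec_eq_iff
    proof
      fix i show "a $ i = (\<chi> i. max (v $ i) (w $ i)) $ i"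
      proof (cases "i = k")
        case True then show ?thesis using yj jk by (simp add: y_def)
      next
        case False
        then have "of_int (a $ i) \<le> of_int (v $ i) + (1/2::real)" "of_int (v $ i) + (1/2::real) \<le> of_int (a $ i) + 1"
          using yo[of i] jk by (auto simp: y_def)
        then have "a $ i = v $ i" by linarith
        then show ?thesis using k(2)[OF False] by simp
      qed
    qed
    then have "g = crossed_face v w" unfolding gaj crossed_face_def k(3) jk by simp
    then show False using g(1) cl by simp
  qed
  have vy: "v \<in> cubes y" and wy: "w \<in> cubes y"
    unfolding cubes_def y_def using k(1,2) by (auto simp: abs_if max_def split: if_splits)
  show ?thesis
    using seg_cc[OF yK vy] seg_cc[OF yK wy]
    by (meson connected_component_sym connected_component_trans)
qed


lemma dual_pt_notK: "dual_pt v \<notin> Kset \<omega>"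
  using ocube_notK dual_pt_ocube by blast

lemma path_cc:
  assumes "(v, w) \<in> (EE \<omega>)\<^sup>*"
  shows "connected_component (- Kset \<omega>) (dual_pt v) (dual_pt w)"
  using assms
proof (induction rule: rtrancl_induct)
  case base then show ?case using dual_pt_notK connected_component_refl by (metis ComplI)
next
  case (step y z) then show ?case using edge_cc connected_component_trans by metis
qed

definition dlt :: "real \<Rightarrow> real" where
  "dlt t = (if t \<in> \<int> then 1 else min (t - of_int (floor t)) (of_int (floor t) + 1 - t))"

lemma dlt_pos: "dlt t > 0"
proof (cases "t \<in> \<int>")
  case False
  have "of_int (floor t) \<le> t" by (rule of_int_floor_le)
  moreover have "of_int (floor t) \<noteq> t" using False by (metis Ints_of_int)
  ultimately have "of_int (floor t) < t" by (rule le_neq_trans)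
  moreover have "t < of_int (floor t) + 1" by (rule real_of_int_floor_add_one_gt)
  moreover have d: "dlt t = min (t - of_int (floor t)) (of_int (floor t) + 1 - t)"
    unfolding dlt_def by (rule if_not_P[OF False])
  ultimately show ?thesis unfolding d by simp
qed (simp add: dlt_def)

lemma dlt_le:
  assumes "of_int k \<noteq> t"
  shows "dlt t \<le> \<bar>t - of_int k\<bar>"
proof (cases "t \<in> \<int>")
  case True
  then obtain m where m: "t = of_int m" by (metis Ints_cases)
  then have "m \<noteq> k" using assms by auto
  then have "1 \<le> \<bar>m - k\<bar>" by linarith
  then have "(1::real) \<le> \<bar>of_int m - of_int k\<bar>"
    by (metis of_int_1_le_iff of_int_abs of_int_diff)
  then show ?thesis using True m unfolding dlt_def by simp
next
  case False
  show ?thesis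
  proof (cases "k \<le> floor t")
    case True
    then have "of_int k \<le> (of_int (floor t) :: real)" by simp
    then show ?thesis using False of_int_floor_le[of t] unfolding dlt_def by auto
  next
    case False': False
    then have "floor t + 1 \<le> k" by simp
    then have "of_int (floor t) + 1 \<le> (of_int k :: real)" by (metis of_int_add of_int_le_iff of_int_1)
    then show ?thesis using False real_of_int_floor_add_one_gt[of t] unfolding dlt_def by auto
  qed
qed

lemma cubes_near:
  assumes "u \<in> cubes z" "\<bar>z $ i - a $ i\<bar> < dlt (a $ i)"
  shows "of_int (u $ i) \<le> a $ i \<and> a $ i \<le> of_int (u $ i) + 1"
proof -
  have z: "of_int (u $ i) \<le> z $ i" "z $ i \<le> of_int (u $ i) + 1"
    using assms(1) unfolding cubes_def by auto
  have 1: "of_int (u $ i) \<le> a $ i"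
  proof (rule ccontr)
    assume "\<not> ?thesis"
    then have "a $ i < of_int (u $ i)" by simp
    then have "dlt (a $ i) \<le> \<bar>a $ i - of_int (u $ i)\<bar>" by (intro dlt_le) simp
    then show False using assms(2) z \<open>a $ i < _\<close> by linarith
  qed
  have 2: "a $ i \<le> of_int (u $ i) + 1"
  proof (rule ccontr)
    assume "\<not> ?thesis"
    then have "a $ i > of_int (u $ i + 1)" by simp
    then have "dlt (a $ i) \<le> \<bar>a $ i - of_int (u $ i + 1)\<bar>" by (intro dlt_le) simp
    then show False using assms(2) z \<open>a $ i > _\<close> by simp
  qed
  show ?thesis using 1 2 by simp
qed

lemma cc_flv:
  assumes "connected_component (- Kset \<omega>) x y"
  shows "(flv x, flv y) \<in> (EE \<omega>)\<^sup>*"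
proof -
  let ?S = "connected_component_set (- Kset \<omega>) x"
  have xS: "x \<in> ?S" and yS: "y \<in> ?S"
    using assms connected_component_in connected_component_refl_eq by (fastforce+)
  have SK: "?S \<subseteq> - Kset \<omega>" by (rule connected_component_subset)
  show ?thesis
  proof (rule connected_equivalence_relation[where R = "\<lambda>a b. (flv a, flv b) \<in> (EE \<omega>)\<^sup>*", OF _ xS yS])
    show "connected ?S" by simp
    show "\<And>x y. (flv x, flv y) \<in> (EE \<omega>)\<^sup>* \<Longrightarrow> x \<in> ?S \<Longrightarrow> y \<in> ?S \<Longrightarrow> (flv y, flv x) \<in> (EE \<omega>)\<^sup>*"
      using E_sym by blast
    show "\<And>x y z. (flv x, flv y) \<in> (EE \<omega>)\<^sup>* \<Longrightarrow> (flv y, flv z) \<in> (EE \<omega>)\<^sup>* \<Longrightarrow> x \<in> ?S \<Longrightarrow> y \<in> ?S \<Longrightarrow> z \<in> ?S \<Longrightarrow> (flv x, flv z) \<in> (EE \<omega>)\<^sup>*"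
      by (meson rtrancl_trans)
    fix a assume aS: "a \<in> ?S"
    define e where "e = Min (range (\<lambda>i. dlt (a $ i)))"
    have epos: "e > 0" unfolding e_def using dlt_pos by (subst Min_gr_iff) auto
    have ele: "\<And>i. e \<le> dlt (a $ i)" unfolding e_def by (intro Min_le) auto
    show "\<exists>T. openin (top_of_set ?S) T \<and> a \<in> T \<and> (\<forall>z\<in>T. (flv a, flv z) \<in> (EE \<omega>)\<^sup>*)"
    proof (intro exI conjI)
      show "openin (top_of_set ?S) (?S \<inter> ball a e)" by (rule openin_open_Int) simp
      show "a \<in> ?S \<inter> ball a e" using aS epos by simp
      show "\<forall>z\<in>?S \<inter> ball a e. (flv a, flv z) \<in> (EE \<omega>)\<^sup>*"
      proof
        fix z assume z: "z \<in> ?S \<inter> ball a e"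
        have "flv z \<in> cubes a" unfolding cubes_def
        proof (intro CollectI allI)
          fix i
          have "\<bar>z $ i - a $ i\<bar> \<le> norm (z - a)" using component_le_norm_cart[of "z - a" i] by simp
          also have "\<dots> < e" using z by (simp add: dist_norm norm_minus_commute)
          also have "\<dots> \<le> dlt (a $ i)" by (rule ele)
          finally show "of_int (flv z $ i) \<le> a $ i \<and> a $ i \<le> of_int (flv z $ i) + 1"
            by (rule cubes_near[OF flv_cubes])
        qed
        moreover have "a \<notin> Kset \<omega>" using aS SK by blast
        ultimately show "(flv a, flv z) \<in> (EE \<omega>)\<^sup>*"
          using cubes_same_cluster flv_cubes by blast
      qed
    qed
  qed
qed

lemma cc_cubes:
  assumes "connected_component (- Kset \<omega>) x y" "u \<in> cubes x" "u' \<in> cubes y"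
  shows "(u, u') \<in> (EE \<omega>)\<^sup>*"
proof -
  have xK: "x \<notin> Kset \<omega>" and yK: "y \<notin> Kset \<omega>"
    using assms(1) connected_component_in by blast+
  have "(u, flv x) \<in> (EE \<omega>)\<^sup>*" using cubes_same_cluster[OF xK assms(2) flv_cubes] .
  moreover have "(flv x, flv y) \<in> (EE \<omega>)\<^sup>*" using cc_flv[OF assms(1)] .
  moreover have "(flv y, u') \<in> (EE \<omega>)\<^sup>*" using cubes_same_cluster[OF yK flv_cubes assms(3)] .
  ultimately show ?thesis by (meson rtrancl_trans)
qed

lemma dual_pt_cubes: "v \<in> cubes (dual_pt v)"
  unfolding cubes_def dual_pt_def by auto

definition Comp :: "('n::finite face \<Rightarrow> bool) \<Rightarrow> int ^ 'n \<Rightarrow> (real ^ 'n) set" where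
  "Comp \<omega> v = connected_component_set (- Kset \<omega>) (dual_pt v)"

definition clus :: "('n::finite face \<Rightarrow> bool) \<Rightarrow> int ^ 'n \<Rightarrow> (int ^ 'n) set" where
  "clus \<omega> v = {w. (v, w) \<in> (EE \<omega>)\<^sup>*}"

lemma Comp_mem: "x \<in> Comp \<omega> v \<Longrightarrow> (v, flv x) \<in> (EE \<omega>)\<^sup>*"
  unfolding Comp_def using cc_cubes[OF _ dual_pt_cubes flv_cubes] by auto

lemma dual_in_Comp: "dual_pt w \<in> Comp \<omega> v \<longleftrightarrow> (v, w) \<in> (EE \<omega>)\<^sup>*"
  unfolding Comp_def using cc_cubes[OF _ dual_pt_cubes dual_pt_cubes] path_cc by auto

lemma Comp_eq: "Comp \<omega> v = Comp \<omega> w \<longleftrightarrow> (v, w) \<in> (EE \<omega>)\<^sup>*"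
proof
  assume "Comp \<omega> v = Comp \<omega> w"
  moreover have "dual_pt w \<in> Comp \<omega> w" using dual_in_Comp by blast
  ultimately show "(v, w) \<in> (EE \<omega>)\<^sup>*" using dual_in_Comp by metis
next
  assume "(v, w) \<in> (EE \<omega>)\<^sup>*"
  then have "dual_pt w \<in> Comp \<omega> v" using dual_in_Comp by blast
  then show "Comp \<omega> v = Comp \<omega> w" unfolding Comp_def using connected_component_eq by metis
qed

lemma components_Comp: "components (- Kset \<omega>) = range (Comp \<omega>)"
proof
  show "components (- Kset \<omega>) \<subseteq> range (Comp \<omega>)"
  proof
    fix C assume "C \<in> components (- Kset \<omega>)"
    then obtain x where x: "x \<in> - Kset \<omega>" "C = connected_component_set (- Kset \<omega>) x"
      unfolding components_iff by blast
    have "connected_component (- Kset \<omega>) x (dual_pt (flv x))"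
      using seg_cc flv_cubes x(1) by blast
    then have "C = Comp \<omega> (flv x)" unfolding x(2) Comp_def
      by (metis connected_component_eq mem_Collect_eq)
    then show "C \<in> range (Comp \<omega>)" by blast
  qed
  show "range (Comp \<omega>) \<subseteq> components (- Kset \<omega>)"
  proof
    fix C assume "C \<in> range (Comp \<omega>)"
    then obtain v where "C = Comp \<omega> v" by blast
    then show "C \<in> components (- Kset \<omega>)"
      unfolding Comp_def components_iff using dual_pt_notK by blast
  qed
qed

lemma finite_box_int: "finite {w :: int ^ 'n::finite. \<forall>i. \<bar>w $ i\<bar> \<le> N}"
proof -
  have "{w :: int ^ 'n. \<forall>i. \<bar>w $ i\<bar> \<le> N} \<subseteq> (\<lambda>f. \<chi> i. f i) ` (PiE UNIV (\<lambda>_. {-N..N}))"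
  proof
    fix w :: "int ^ 'n" assume "w \<in> {w. \<forall>i. \<bar>w $ i\<bar> \<le> N}"
    then have "\<forall>i. w $ i \<in> {-N..N}"
      by (metis abs_le_D1 abs_le_D2 atLeastAtMost_iff minus_le_iff mem_Collect_eq)
    then have "(\<lambda>i. w $ i) \<in> PiE UNIV (\<lambda>_. {-N..N})" by auto
    moreover have "w = (\<chi> i. (\<lambda>i. w $ i) i)" by simp
    ultimately show "w \<in> (\<lambda>f. \<chi> i. f i) ` (PiE UNIV (\<lambda>_. {-N..N}))" by blast
  qed
  moreover have "finite ((\<lambda>f. \<chi> i. f i) ` (PiE UNIV (\<lambda>_. {-N..N :: int})) :: (int ^ 'n) set)"
    by (intro finite_imageI finite_PiE) auto
  ultimately show ?thesis by (rule finite_subset)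
qed

lemma bounded_Comp: "bounded (Comp \<omega> v) \<longleftrightarrow> finite (clus \<omega> v)"
proof
  assume "bounded (Comp \<omega> v)"
  then obtain B where B: "\<And>x. x \<in> Comp \<omega> v \<Longrightarrow> norm x \<le> B" unfolding bounded_iff by blast
  have "clus \<omega> v \<subseteq> {w. \<forall>i. \<bar>w $ i\<bar> \<le> ceiling B + 1}"
  proof
    fix w assume "w \<in> clus \<omega> v"
    then have "dual_pt w \<in> Comp \<omega> v" using dual_in_Comp unfolding clus_def by blast
    then have nB: "norm (dual_pt w) \<le> B" by (rule B)
    show "w \<in> {w. \<forall>i. \<bar>w $ i\<bar> \<le> ceiling B + 1}"
    proof (intro CollectI allI)
      fix i
      have "\<bar>of_int (w $ i) + 1/2\<bar> \<le> B"
        using component_le_norm_cart[of "dual_pt w" i] nB by (simp add: dual_pt_def)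
      then have "of_int \<bar>w $ i\<bar> \<le> B + 1" by linarith
      also have "\<dots> \<le> of_int (ceiling B + 1)" by (simp add: le_of_int_ceiling)
      finally show "\<bar>w $ i\<bar> \<le> ceiling B + 1" by (simp only: of_int_le_iff)
    qed
  qed
  then show "finite (clus \<omega> v)" using finite_box_int finite_subset by blast
next
  assume fin: "finite (clus \<omega> v)"
  have "Comp \<omega> v \<subseteq> (\<Union>w\<in>clus \<omega> v. cbox (\<chi> i. of_int (w $ i)) (\<chi> i. of_int (w $ i) + 1))"
  proof
    fix x assume x: "x \<in> Comp \<omega> v"
    then have "flv x \<in> clus \<omega> v" using Comp_mem unfolding clus_def by blast
    moreover have "x \<in> cbox (\<chi> i. of_int (flv x $ i)) (\<chi> i. of_int (flv x $ i) + 1)"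
      using flv_cubes[of x] unfolding mem_box_cart cubes_def by simp
    ultimately show "x \<in> (\<Union>w\<in>clus \<omega> v. cbox (\<chi> i. of_int (w $ i)) (\<chi> i. of_int (w $ i) + 1))"
      by blast
  qed
  moreover have "bounded (\<Union>w\<in>clus \<omega> v. cbox (\<chi> i. of_int (w $ i)) (\<chi> i. of_int (w $ i) + (1::real)))"
    using fin by (intro bounded_UN) auto
  ultimately show "bounded (Comp \<omega> v)" using bounded_subset by blast
qed

lemma inf_dual_cluster_iff: "v \<in> inf_dual_cluster \<omega> \<longleftrightarrow> infinite (clus \<omega> v)"
  unfolding inf_dual_cluster_def clus_def by simp

lemma holes_Comp: "holes \<omega> = {Comp \<omega> v | v. v \<notin> inf_dual_cluster \<omega>}"
  unfolding holes_def components_Comp inf_dual_cluster_iff by (auto simp: bounded_Comp)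


lemma clus_I:
  assumes "(v, w) \<in> (EE \<omega>)\<^sup>*"
  shows "v \<in> inf_dual_cluster \<omega> \<longleftrightarrow> w \<in> inf_dual_cluster \<omega>"
proof -
  have "clus \<omega> v = clus \<omega> w"
    using assms E_sym unfolding clus_def by (meson rtrancl_trans)
  then show ?thesis unfolding inf_dual_cluster_iff by simp
qed

lemma face_closure:
  assumes "dual_adj a b"
  shows "face_set (crossed_face a b) \<subseteq> closure (ocube a)"
proof
  fix x assume x: "x \<in> face_set (crossed_face a b)"
  obtain k where k: "\<bar>a $ k - b $ k\<bar> = 1" "\<And>i. i \<noteq> k \<Longrightarrow> a $ i = b $ i"
    "(SOME k. a $ k \<noteq> b $ k) = k"
    using dual_adjD[OF assms] by blast
  have xk: "x $ k = of_int (max (a $ k) (b $ k))"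
    and xo: "\<And>i. i \<noteq> k \<Longrightarrow> of_int (max (a $ i) (b $ i)) \<le> x $ i \<and> x $ i \<le> of_int (max (a $ i) (b $ i)) + 1"
    using x unfolding face_set_def crossed_face_def k(3) by auto
  have "\<forall>i. of_int (a $ i) \<le> x $ i \<and> x $ i \<le> of_int (a $ i) + 1"
  proof
    fix i show "of_int (a $ i) \<le> x $ i \<and> x $ i \<le> of_int (a $ i) + 1"
    proof (cases "i = k")
      case True
      have "max (a $ k) (b $ k) = a $ k \<or> max (a $ k) (b $ k) = a $ k + 1" using k(1) by linarith
      then show ?thesis using xk True by auto
    next
      case False then show ?thesis using xo[OF False] k(2)[OF False] by simp
    qed
  qed
  then show "x \<in> closure (ocube a)" unfolding closure_ocube by simp
qed

lemma ocube_Comp: "ocube a \<subseteq> Comp \<omega> a"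
  unfolding Comp_def
  by (rule connected_component_maximal[OF dual_pt_ocube connected_ocube]) (use ocube_notK in blast)

lemma face_frontier:
  assumes "dual_adj a b" "\<omega> (crossed_face a b)"
  shows "face_set (crossed_face a b) \<subseteq> frontier (Comp \<omega> a)"
proof
  fix x assume x: "x \<in> face_set (crossed_face a b)"
  have "x \<in> closure (Comp \<omega> a)" using face_closure[OF assms(1)] closure_mono[OF ocube_Comp] x by blast
  moreover have "x \<in> Kset \<omega>" using face_K assms(2) x by blast
  then have "x \<notin> interior (Comp \<omega> a)"
    using interior_subset connected_component_subset unfolding Comp_def by blast
  ultimately show "x \<in> frontier (Comp \<omega> a)" unfolding frontier_def by blast
qed

lemma holes_Comp_mem: "v \<notin> inf_dual_cluster \<omega> \<Longrightarrow> Comp \<omega> v \<in> holes \<omega>"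
  unfolding holes_Comp by blast

lemma adj_intro:
  assumes "v \<notin> inf_dual_cluster \<omega>" "w \<notin> inf_dual_cluster \<omega>" "Comp \<omega> v \<noteq> Comp \<omega> w"
    "(v, a) \<in> (EE \<omega>)\<^sup>*" "(w, b) \<in> (EE \<omega>)\<^sup>*" "dual_adj a b"
  shows "hole_adj \<omega> (Comp \<omega> v) (Comp \<omega> w)"
proof -
  have ca: "Comp \<omega> v = Comp \<omega> a" and cb: "Comp \<omega> w = Comp \<omega> b"
    using assms(4,5) Comp_eq by blast+
  have "(a, b) \<notin> EE \<omega>"
  proof
    assume "(a, b) \<in> EE \<omega>"
    then have "Comp \<omega> a = Comp \<omega> b" using Comp_eq by blast
    then show False using assms(3) ca cb by simp
  qed
  then have om: "\<omega> (crossed_face a b)" using assms(6) unfolding open_dual_edges_def by auto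
  have f1: "face_set (crossed_face a b) \<subseteq> frontier (Comp \<omega> a)" using face_frontier[of a b \<omega>] assms(6) om by blast
  have f2: "face_set (crossed_face a b) \<subseteq> frontier (Comp \<omega> b)"
    using face_frontier[of b a \<omega>] dual_adj_sym[OF assms(6)] om crossed_face_sym[of a b] by simp
  have ex: "\<exists>f. face_set f \<subseteq> frontier (Comp \<omega> v) \<and> face_set f \<subseteq> frontier (Comp \<omega> w)"
    using f1 f2 unfolding ca cb by blast
  show ?thesis unfolding hole_adj_def
    using holes_Comp_mem[OF assms(1)] holes_Comp_mem[OF assms(2)] assms(3) ex by blast
qed

lemma near_face:
  assumes "face_set f \<subseteq> frontier (Comp \<omega> v)"
  shows "\<exists>a. (v, a) \<in> (EE \<omega>)\<^sup>* \<and> (\<forall>i. i \<noteq> snd f \<longrightarrow> a $ i = fst f $ i) \<and>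
    (a $ snd f = fst f $ snd f \<or> a $ snd f = fst f $ snd f - 1)"
proof -
  define j where "j = snd f"
  define c where "c = fst f"
  define y :: "real ^ 'a" where "y = (\<chi> i. if i = j then of_int (c $ j) else of_int (c $ i) + 1/2)"
  have "y \<in> face_set f" unfolding face_set_def y_def j_def c_def by auto
  then have "y \<in> closure (Comp \<omega> v)" using assms unfolding frontier_def by blast
  moreover have "(1/2::real) > 0" by simp
  ultimately obtain z where z: "z \<in> Comp \<omega> v" "dist z y < 1/2"
    unfolding closure_approachable by blast
  have zc: "\<And>i. \<bar>z $ i - y $ i\<bar> < 1/2"
  proof -
    fix i
    have "\<bar>z $ i - y $ i\<bar> \<le> norm (z - y)" using component_le_norm_cart[of "z - y" i] by simp
    then show "\<bar>z $ i - y $ i\<bar> < 1/2" using z(2) by (simp add: dist_norm)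
  qed
  have o: "\<forall>i. i \<noteq> snd f \<longrightarrow> flv z $ i = fst f $ i"
  proof (intro allI impI)
    fix i assume "i \<noteq> snd f"
    then have "y $ i = of_int (c $ i) + 1/2" unfolding y_def j_def by simp
    then have "of_int (c $ i) \<le> z $ i" "z $ i < of_int (c $ i) + 1" using zc[of i] by linarith+
    then show "flv z $ i = fst f $ i" unfolding flv_def c_def by (simp add: floor_unique)
  qed
  have yj: "y $ j = of_int (c $ j)" unfolding y_def by simp
  have jj: "flv z $ j = c $ j \<or> flv z $ j = c $ j - 1"
  proof (cases "z $ j \<ge> of_int (c $ j)")
    case True
    then have "z $ j < of_int (c $ j) + 1" using zc[of j] yj by linarith
    then show ?thesis using True unfolding flv_def by (simp add: floor_unique)
  next
    case False
    then have "of_int (c $ j - 1) \<le> z $ j" "z $ j < of_int (c $ j - 1) + 1" using zc[of j] yj by simp_all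
    then show ?thesis unfolding flv_def by (simp add: floor_unique)
  qed
  show ?thesis using Comp_mem[OF z(1)] o jj unfolding j_def c_def by blast
qed

lemma adj_elim:
  assumes "hole_adj \<omega> (Comp \<omega> v) (Comp \<omega> w)"
  shows "\<exists>a b. (v, a) \<in> (EE \<omega>)\<^sup>* \<and> (w, b) \<in> (EE \<omega>)\<^sup>* \<and> dual_adj a b"
proof -
  obtain f where f: "face_set f \<subseteq> frontier (Comp \<omega> v)" "face_set f \<subseteq> frontier (Comp \<omega> w)"
    and ne: "Comp \<omega> v \<noteq> Comp \<omega> w"
    using assms unfolding hole_adj_def by blast
  obtain a where a: "(v, a) \<in> (EE \<omega>)\<^sup>*" "\<forall>i. i \<noteq> snd f \<longrightarrow> a $ i = fst f $ i"
    "a $ snd f = fst f $ snd f \<or> a $ snd f = fst f $ snd f - 1"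
    using near_face[OF f(1)] by blast
  obtain b where b: "(w, b) \<in> (EE \<omega>)\<^sup>*" "\<forall>i. i \<noteq> snd f \<longrightarrow> b $ i = fst f $ i"
    "b $ snd f = fst f $ snd f \<or> b $ snd f = fst f $ snd f - 1"
    using near_face[OF f(2)] by blast
  have "a $ snd f \<noteq> b $ snd f"
  proof
    assume "a $ snd f = b $ snd f"
    then have "a = b" using a(2) b(2) by (metis vec_eq_iff)
    then have "(v, w) \<in> (EE \<omega>)\<^sup>*" using a(1) b(1) E_sym by (meson rtrancl_trans)
    then show False using ne Comp_eq by blast
  qed
  then have "\<bar>a $ snd f - b $ snd f\<bar> = 1" using a(3) b(3) by auto
  then have "dual_adj a b" by (rule dual_adjI) (use a(2) b(2) in simp)
  then show ?thesis using a(1) b(1) by blast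
qed


lemma E_DE:
  assumes "(x, y) \<in> (EE \<omega>)\<^sup>*" "x \<notin> inf_dual_cluster \<omega>"
  shows "(x, y) \<in> (dual_minus_edges (inf_dual_cluster \<omega>))\<^sup>*"
  using assms(1)
proof (induction rule: rtrancl_induct)
  case base then show ?case by simp
next
  case (step y z)
  have yI: "y \<notin> inf_dual_cluster \<omega>" using clus_I[OF step(1)] assms(2) by blast
  have "(y, z) \<in> (EE \<omega>)\<^sup>*" using step(2) by blast
  then have zI: "z \<notin> inf_dual_cluster \<omega>" using clus_I yI by blast
  have "dual_adj y z" using step(2) unfolding open_dual_edges_def by auto
  then have "(y, z) \<in> dual_minus_edges (inf_dual_cluster \<omega>)"
    unfolding dual_minus_edges_def using yI zI by auto
  then show ?case using step(3) by (rule rtrancl_into_rtrancl[rotated])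
qed

lemma HE_DE:
  assumes "(H, H') \<in> (hole_edges \<omega>)\<^sup>*" "H = Comp \<omega> v" "v \<notin> inf_dual_cluster \<omega>"
  shows "\<exists>w. H' = Comp \<omega> w \<and> w \<notin> inf_dual_cluster \<omega> \<and> (v, w) \<in> (dual_minus_edges (inf_dual_cluster \<omega>))\<^sup>*"
  using assms(1)
proof (induction rule: rtrancl_induct)
  case base then show ?case using assms(2,3) by blast
next
  case (step Y Z)
  then obtain w where w: "Y = Comp \<omega> w" "w \<notin> inf_dual_cluster \<omega>"
    "(v, w) \<in> (dual_minus_edges (inf_dual_cluster \<omega>))\<^sup>*" by blast
  have adj: "hole_adj \<omega> Y Z" using step(2) unfolding hole_edges_def by simp
  then have "Z \<in> holes \<omega>" unfolding hole_adj_def by blast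
  then obtain w' where w': "Z = Comp \<omega> w'" "w' \<notin> inf_dual_cluster \<omega>" unfolding holes_Comp by blast
  obtain a b where ab: "(w, a) \<in> (EE \<omega>)\<^sup>*" "(w', b) \<in> (EE \<omega>)\<^sup>*" "dual_adj a b"
    using adj_elim[of \<omega> w w'] adj w(1) w'(1) by blast
  have aI: "a \<notin> inf_dual_cluster \<omega>" using clus_I[OF ab(1)] w(2) by blast
  have bI: "b \<notin> inf_dual_cluster \<omega>" using clus_I[OF ab(2)] w'(2) by blast
  have 1: "(w, a) \<in> (dual_minus_edges (inf_dual_cluster \<omega>))\<^sup>*" using E_DE[OF ab(1) w(2)] .
  have 2: "(a, b) \<in> dual_minus_edges (inf_dual_cluster \<omega>)"
    unfolding dual_minus_edges_def using aI bI ab(3) by auto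
  have 3: "(b, w') \<in> (dual_minus_edges (inf_dual_cluster \<omega>))\<^sup>*" using E_DE[OF E_sym[OF ab(2)] bI] .
  have "(v, w') \<in> (dual_minus_edges (inf_dual_cluster \<omega>))\<^sup>*"
    using w(3) 1 2 3 by (meson rtrancl_trans r_into_rtrancl)
  then show ?case using w' by blast
qed

lemma DE_HE:
  assumes "(v, w) \<in> (dual_minus_edges (inf_dual_cluster \<omega>))\<^sup>*" "v \<notin> inf_dual_cluster \<omega>"
  shows "(Comp \<omega> v, Comp \<omega> w) \<in> (hole_edges \<omega>)\<^sup>* \<and> w \<notin> inf_dual_cluster \<omega>"
  using assms(1)
proof (induction rule: rtrancl_induct)
  case base then show ?case using assms(2) by simp
next
  case (step y z)
  have yz: "y \<notin> inf_dual_cluster \<omega>" "z \<notin> inf_dual_cluster \<omega>" "dual_adj y z"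
    using step(2) unfolding dual_minus_edges_def by auto
  have "(Comp \<omega> y, Comp \<omega> z) \<in> (hole_edges \<omega>)\<^sup>*"
  proof (cases "Comp \<omega> y = Comp \<omega> z")
    case True then show ?thesis by simp
  next
    case False
    then have "hole_adj \<omega> (Comp \<omega> y) (Comp \<omega> z)"
      using adj_intro[OF yz(1,2) False _ _ yz(3)] by blast
    then show ?thesis unfolding hole_edges_def by auto
  qed
  then show ?case using step(3) yz(2) by (meson rtrancl_trans)
qed

definition Phi :: "('n::finite face \<Rightarrow> bool) \<Rightarrow> (real ^ 'n) set set \<Rightarrow> (int ^ 'n) set" where
  "Phi \<omega> C = {w. w \<notin> inf_dual_cluster \<omega> \<and> Comp \<omega> w \<in> C}"

lemma hc_char:
  assumes "C \<in> hole_clusters \<omega>"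
  obtains v where "v \<notin> inf_dual_cluster \<omega>" "C = {H'. (Comp \<omega> v, H') \<in> (hole_edges \<omega>)\<^sup>*}"
  using assms unfolding hole_clusters_def holes_Comp by blast

lemma Phi_eq:
  assumes "v \<notin> inf_dual_cluster \<omega>"
  shows "Phi \<omega> {H'. (Comp \<omega> v, H') \<in> (hole_edges \<omega>)\<^sup>*} = {w. (v, w) \<in> (dual_minus_edges (inf_dual_cluster \<omega>))\<^sup>*}"
proof (intro set_eqI iffI)
  fix w assume "w \<in> Phi \<omega> {H'. (Comp \<omega> v, H') \<in> (hole_edges \<omega>)\<^sup>*}"
  then have wI: "w \<notin> inf_dual_cluster \<omega>" and h: "(Comp \<omega> v, Comp \<omega> w) \<in> (hole_edges \<omega>)\<^sup>*"
    unfolding Phi_def by auto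
  obtain w' where w': "Comp \<omega> w = Comp \<omega> w'" "w' \<notin> inf_dual_cluster \<omega>"
    "(v, w') \<in> (dual_minus_edges (inf_dual_cluster \<omega>))\<^sup>*"
    using HE_DE[OF h refl assms] by blast
  have "(w', w) \<in> (EE \<omega>)\<^sup>*" using w'(1) Comp_eq E_sym by blast
  then have "(w', w) \<in> (dual_minus_edges (inf_dual_cluster \<omega>))\<^sup>*" using E_DE w'(2) by blast
  then show "w \<in> {w. (v, w) \<in> (dual_minus_edges (inf_dual_cluster \<omega>))\<^sup>*}"
    using w'(3) by (meson mem_Collect_eq rtrancl_trans)
next
  fix w assume "w \<in> {w. (v, w) \<in> (dual_minus_edges (inf_dual_cluster \<omega>))\<^sup>*}"
  then show "w \<in> Phi \<omega> {H'. (Comp \<omega> v, H') \<in> (hole_edges \<omega>)\<^sup>*}"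
    using DE_HE[of v w \<omega>] assms unfolding Phi_def by auto
qed

lemma C_image:
  assumes "C \<in> hole_clusters \<omega>"
  shows "C = Comp \<omega> ` Phi \<omega> C"
proof -
  obtain v where v: "v \<notin> inf_dual_cluster \<omega>" "C = {H'. (Comp \<omega> v, H') \<in> (hole_edges \<omega>)\<^sup>*}"
    using hc_char[OF assms] by blast
  show ?thesis
  proof
    show "C \<subseteq> Comp \<omega> ` Phi \<omega> C"
    proof
      fix H assume "H \<in> C"
      then have "(Comp \<omega> v, H) \<in> (hole_edges \<omega>)\<^sup>*" using v by simp
      then obtain w where "H = Comp \<omega> w" "w \<notin> inf_dual_cluster \<omega>" using HE_DE[OF _ refl v(1)] by blast
      then show "H \<in> Comp \<omega> ` Phi \<omega> C" using \<open>H \<in> C\<close> unfolding Phi_def by blast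
    qed
    show "Comp \<omega> ` Phi \<omega> C \<subseteq> C" unfolding Phi_def by blast
  qed
qed

lemma C_mem:
  assumes "C \<in> hole_clusters \<omega>" "H \<in> C"
  shows "\<exists>w. w \<in> Phi \<omega> C \<and> H = Comp \<omega> w"
proof -
  from assms(2) have "H \<in> Comp \<omega> ` Phi \<omega> C" by (subst (asm) C_image[OF assms(1)])
  then show ?thesis by blast
qed

lemma main_det:
  "\<exists>\<Phi>. bij_betw \<Phi> (hole_clusters \<omega>) (dual_minus_components (inf_dual_cluster \<omega>)) \<and>
        (\<forall>C\<in>hole_clusters \<omega>. \<forall>H\<in>C. \<forall>v. dual_pt v \<in> H \<longrightarrow> v \<in> \<Phi> C) \<and>
        (\<forall>C\<in>hole_clusters \<omega>. infinite C \<longleftrightarrow> infinite (\<Phi> C))"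
proof (rule exI[of _ "Phi \<omega>"], intro conjI ballI allI impI)
  show "bij_betw (Phi \<omega>) (hole_clusters \<omega>) (dual_minus_components (inf_dual_cluster \<omega>))"
  proof (rule bij_betw_imageI)
    show "inj_on (Phi \<omega>) (hole_clusters \<omega>)"
    proof (rule inj_onI)
      fix C1 C2 assume "C1 \<in> hole_clusters \<omega>" "C2 \<in> hole_clusters \<omega>" "Phi \<omega> C1 = Phi \<omega> C2"
      note h = this
      have "C1 = Comp \<omega> ` Phi \<omega> C1" by (rule C_image) (rule h(1))
      also have "\<dots> = Comp \<omega> ` Phi \<omega> C2" by (simp only: h(3))
      also have "\<dots> = C2" by (rule C_image[symmetric]) (rule h(2))
      finally show "C1 = C2" .
    qed
    show "Phi \<omega> ` hole_clusters \<omega> = dual_minus_components (inf_dual_cluster \<omega>)"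
    proof
      show "Phi \<omega> ` hole_clusters \<omega> \<subseteq> dual_minus_components (inf_dual_cluster \<omega>)"
      proof
        fix D assume "D \<in> Phi \<omega> ` hole_clusters \<omega>"
        then obtain C where C: "C \<in> hole_clusters \<omega>" "D = Phi \<omega> C" by blast
        obtain v where v: "v \<notin> inf_dual_cluster \<omega>" "C = {H'. (Comp \<omega> v, H') \<in> (hole_edges \<omega>)\<^sup>*}"
          using hc_char[OF C(1)] by blast
        show "D \<in> dual_minus_components (inf_dual_cluster \<omega>)"
          unfolding dual_minus_components_def C(2) v(2) Phi_eq[OF v(1)] using v(1) by blast
      qed
      show "dual_minus_components (inf_dual_cluster \<omega>) \<subseteq> Phi \<omega> ` hole_clusters \<omega>"
      proof
        fix D assume "D \<in> dual_minus_components (inf_dual_cluster \<omega>)"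
        then obtain v where v: "v \<notin> inf_dual_cluster \<omega>"
          "D = {w. (v, w) \<in> (dual_minus_edges (inf_dual_cluster \<omega>))\<^sup>*}"
          unfolding dual_minus_components_def by blast
        have "{H'. (Comp \<omega> v, H') \<in> (hole_edges \<omega>)\<^sup>*} \<in> hole_clusters \<omega>"
          unfolding hole_clusters_def using holes_Comp_mem[OF v(1)] by blast
        moreover have "D = Phi \<omega> {H'. (Comp \<omega> v, H') \<in> (hole_edges \<omega>)\<^sup>*}" using Phi_eq[OF v(1)] v(2) by simp
        ultimately show "D \<in> Phi \<omega> ` hole_clusters \<omega>" by blast
      qed
    qed
  qed
next
  fix C H v assume C: "C \<in> hole_clusters \<omega>" and H: "H \<in> C" and vH: "dual_pt v \<in> H"
  obtain w where w: "w \<in> Phi \<omega> C" "H = Comp \<omega> w" using C_mem[OF C H] by blast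
  have wI: "w \<notin> inf_dual_cluster \<omega>" using w(1) unfolding Phi_def by blast
  have "(w, v) \<in> (EE \<omega>)\<^sup>*" using vH w(2) dual_in_Comp by blast
  then have "Comp \<omega> w = Comp \<omega> v" "v \<notin> inf_dual_cluster \<omega>" using Comp_eq[of \<omega> w v] clus_I[of w v \<omega>] wI by blast+
  then have "Comp \<omega> v = H" "v \<notin> inf_dual_cluster \<omega>" using w(2) by simp_all
  then show "v \<in> Phi \<omega> C" unfolding Phi_def using H by simp
next
  fix C assume C: "C \<in> hole_clusters \<omega>"
  show "infinite C \<longleftrightarrow> infinite (Phi \<omega> C)"
  proof
    assume "infinite C"
    show "infinite (Phi \<omega> C)"
    proof
      assume "finite (Phi \<omega> C)"
      then have f: "finite (Comp \<omega> ` Phi \<omega> C)" by (rule finite_imageI)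
      have "finite C = finite (Comp \<omega> ` Phi \<omega> C)" using C_image[OF C] by (rule arg_cong)
      then show False using f \<open>infinite C\<close> by simp
    qed
  next
    assume inf: "infinite (Phi \<omega> C)"
    show "infinite C"
    proof
      assume fin: "finite C"
      have "Phi \<omega> C \<subseteq> (\<Union>H\<in>C. {w. w \<notin> inf_dual_cluster \<omega> \<and> Comp \<omega> w = H})"
        unfolding Phi_def by blast
      moreover have "finite {w. w \<notin> inf_dual_cluster \<omega> \<and> Comp \<omega> w = H}" if "H \<in> C" for H
      proof -
        obtain u where u: "u \<in> Phi \<omega> C" "H = Comp \<omega> u" using C_mem[OF C \<open>H \<in> C\<close>] by blast
        have uI: "u \<notin> inf_dual_cluster \<omega>" using u(1) unfolding Phi_def by blast
        have "{w. w \<notin> inf_dual_cluster \<omega> \<and> Comp \<omega> w = H} \<subseteq> clus \<omega> u"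
          unfolding clus_def u(2) using Comp_eq by blast
        moreover have "finite (clus \<omega> u)" using uI inf_dual_cluster_iff by blast
        ultimately show ?thesis by (rule finite_subset)
      qed
      ultimately have "finite (Phi \<omega> C)" using fin by (meson finite_UN_I finite_subset)
      then show False using inf by simp
    qed
  qed
qed

theorem lemma3p3:
  fixes p :: real
  assumes "CARD('n::finite) \<ge> 2" and "0 \<le> p" and "p \<le> 1"
  shows "AE \<omega> in (face_perc p :: ('n face \<Rightarrow> bool) measure).
    \<exists>\<Phi>. bij_betw \<Phi> (hole_clusters \<omega>) (dual_minus_components (inf_dual_cluster \<omega>)) \<and>
        (\<forall>C\<in>hole_clusters \<omega>. \<forall>H\<in>C. \<forall>v. dual_pt v \<in> H \<longrightarrow> v \<in> \<Phi> C) \<and>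
        (\<forall>C\<in>hole_clusters \<omega>. infinite C \<longleftrightarrow> infinite (\<Phi> C))"
  by (rule AE_I2) (rule main_det)

end
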